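(* For all integers $k\geq 2$ and $i\geq 2k+3$, and all integers $j\geq k+2$, $$R_k^{\mathcal{BIP}}(i,j)=\begin{cases}2j-1-k, & \text{if } k+2\leq j\leq 2k,\\ 2j-1, & \text{if } j\geq 2k+1,\end{cases}$$ where $\mathcal{BIP}$ is the class of bipartite graphs.
   Context: All graphs are finite and simple. For a graph $G$ and a nonnegative integer $k$, a $k$-sparse $j$-set is a set of $j$ vertices of $G$ inducing a subgraph of maximum degree at most $k$; a $k$-dense $i$-set is a set of $i$ vertices of $G$ that is $k$-sparse in the complement of $G$. For a graph class $\mathcal{G}$, $R_k^{\mathcal{G}}(i,j)$ is the smallest natural number $n$ such that every graph on $n$ vertices in $\mathcal{G}$ has either a $k$-dense $i$-set or a $k$-sparse $j$-set. *)

theory Defs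
  imports Main
begin

text \<open>For Ramsey-type numbers we
  may take the vertex set {0..<n}, since the properties are isomorphism invariant.\<close>

definition simple_graph :: "nat set \<Rightarrow> (nat \<Rightarrow> nat \<Rightarrow> bool) \<Rightarrow> bool" where
  "simple_graph V E \<longleftrightarrow> finite V \<and>
     (\<forall>u\<in>V. \<forall>v\<in>V. E u v \<longleftrightarrow> E v u) \<and> (\<forall>v\<in>V. \<not> E v v)"

definition compl_graph :: "(nat \<Rightarrow> nat \<Rightarrow> bool) \<Rightarrow> nat \<Rightarrow> nat \<Rightarrow> bool" where
  "compl_graph E u v \<longleftrightarrow> u \<noteq> v \<and> \<not> E u v"

definition k_sparse_set :: "nat set \<Rightarrow> (nat \<Rightarrow> nat \<Rightarrow> bool) \<Rightarrow> nat \<Rightarrow> nat set \<Rightarrow> bool" where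
  "k_sparse_set V E k S \<longleftrightarrow> S \<subseteq> V \<and> (\<forall>v\<in>S. card {u\<in>S. E v u} \<le> k)"

definition k_dense_set :: "nat set \<Rightarrow> (nat \<Rightarrow> nat \<Rightarrow> bool) \<Rightarrow> nat \<Rightarrow> nat set \<Rightarrow> bool" where
  "k_dense_set V E k S \<longleftrightarrow> k_sparse_set V (compl_graph E) k S"

definition bipartite :: "nat set \<Rightarrow> (nat \<Rightarrow> nat \<Rightarrow> bool) \<Rightarrow> bool" where
  "bipartite V E \<longleftrightarrow> (\<exists>A\<subseteq>V. \<forall>u\<in>V. \<forall>v\<in>V. E u v \<longrightarrow> (u \<in> A \<longleftrightarrow> v \<notin> A))"

definition ramsey_k_class ::
    "(nat set \<Rightarrow> (nat \<Rightarrow> nat \<Rightarrow> bool) \<Rightarrow> bool) \<Rightarrow> nat \<Rightarrow> nat \<Rightarrow> nat \<Rightarrow> nat" where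
  "ramsey_k_class C k i j = (LEAST n. \<forall>E. simple_graph {0..<n} E \<and> C {0..<n} E \<longrightarrow>
      (\<exists>S. card S = i \<and> k_dense_set {0..<n} E k S) \<or>
      (\<exists>S. card S = j \<and> k_sparse_set {0..<n} E k S))"

end

theory Submission
  imports Defs
begin

lemma indep_bad:
  assumes "finite S" "T \<subseteq> S" "\<forall>u\<in>T. \<forall>v\<in>T. \<not> E u v" "card T \<ge> k + 2"
    "\<forall>v\<in>S. card {u\<in>S. compl_graph E v u} \<le> k"
  shows False
proof -
  have "T \<noteq> {}" using assms(4) by auto
  then obtain v where v: "v \<in> T" by auto
  have sub: "T - {v} \<subseteq> {u\<in>S. compl_graph E v u}"
    using assms(2,3) v by (auto simp: compl_graph_def)
  have "card (T - {v}) \<le> card {u\<in>S. compl_graph E v u}"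
    by (rule card_mono) (use assms(1) sub in auto)
  moreover have "card (T - {v}) = card T - 1" using v by simp
  moreover have "card {u\<in>S. compl_graph E v u} \<le> k" using assms(5) v assms(2) by auto
  ultimately show False using assms(4) by linarith
qed

lemma no_dense:
  assumes "bipartite V E" "card S = i" "i \<ge> 2 * k + 3" "k_dense_set V E k S"
  shows False
proof -
  obtain A where A: "A \<subseteq> V" "\<forall>u\<in>V. \<forall>v\<in>V. E u v \<longrightarrow> (u \<in> A \<longleftrightarrow> v \<notin> A)"
    using assms(1) unfolding bipartite_def by blast
  have SV: "S \<subseteq> V" and dn: "\<forall>v\<in>S. card {u\<in>S. compl_graph E v u} \<le> k"
    using assms(4) unfolding k_dense_set_def k_sparse_set_def by auto
  have fin: "finite S"
  proof (rule ccontr)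
    assume "infinite S" then have "card S = 0" by simp
    with assms(2,3) show False by simp
  qed
  have "card (S \<inter> A) + card (S - A) = card S"
    using card_Int_Diff[OF fin, of A] by simp
  then have "card (S \<inter> A) \<ge> k + 2 \<or> card (S - A) \<ge> k + 2" using assms(2,3) by linarith
  then show False
  proof
    assume c: "card (S \<inter> A) \<ge> k + 2"
    have ind: "\<forall>u\<in>S \<inter> A. \<forall>v\<in>S \<inter> A. \<not> E u v"
    proof (intro ballI)
      fix u v assume u: "u \<in> S \<inter> A" and v: "v \<in> S \<inter> A"
      then have "u \<in> V" "v \<in> V" using SV by auto
      then show "\<not> E u v" using A(2) u v by auto
    qed
    show False by (rule indep_bad[OF fin Int_lower1 ind c dn])
  next
    assume c: "card (S - A) \<ge> k + 2"
    have ind: "\<forall>u\<in>S - A. \<forall>v\<in>S - A. \<not> E u v"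
    proof (intro ballI)
      fix u v assume u: "u \<in> S - A" and v: "v \<in> S - A"
      then have "u \<in> V" "v \<in> V" using SV by auto
      then show "\<not> E u v" using A(2) u v by auto
    qed
    show False by (rule indep_bad[OF fin Diff_subset ind c dn])
  qed
qed

lemma sparse_union:
  assumes A: "\<forall>u\<in>V. \<forall>v\<in>V. E u v \<longrightarrow> (u \<in> A \<longleftrightarrow> v \<notin> A)"
    and X: "SX \<subseteq> V \<inter> A" and Y: "SY \<subseteq> V - A" and fX: "finite SX" and fY: "finite SY"
    and cX: "SY \<noteq> {} \<Longrightarrow> card SX \<le> k" and cY: "SX \<noteq> {} \<Longrightarrow> card SY \<le> k"
  shows "k_sparse_set V E k (SX \<union> SY)"
  unfolding k_sparse_set_def
proof (intro conjI ballI)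
  show "SX \<union> SY \<subseteq> V" using X Y by auto
next
  fix v assume v: "v \<in> SX \<union> SY"
  show "card {u \<in> SX \<union> SY. E v u} \<le> k"
  proof (cases "v \<in> SX")
    case True
    have s: "{u \<in> SX \<union> SY. E v u} \<subseteq> SY" using True A X Y by blast
    show ?thesis
    proof (cases "SY = {}")
      case True
      have e: "{u \<in> SX \<union> SY. E v u} = {}" using s True by blast
      show ?thesis unfolding e by simp
    next
      case False
      have "card {u \<in> SX \<union> SY. E v u} \<le> card SY" by (rule card_mono[OF fY s])
      then show ?thesis using cY True by fastforce
    qed
  next
    case False
    then have vY: "v \<in> SY" using v by auto
    have s: "{u \<in> SX \<union> SY. E v u} \<subseteq> SX" using vY A X Y by blast
    have "card {u \<in> SX \<union> SY. E v u} \<le> card SX" by (rule card_mono[OF fX s])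
    then show ?thesis using cX vY by fastforce
  qed
qed

definition cb :: "nat \<Rightarrow> nat \<Rightarrow> nat \<Rightarrow> bool" where
  "cb a u v \<longleftrightarrow> (u < a \<and> a \<le> v) \<or> (v < a \<and> a \<le> u)"

lemma cb_simple: "simple_graph {0..<n} (cb a)"
  unfolding simple_graph_def cb_def by auto

lemma cb_bip: "bipartite {0..<n} (cb a)"
  unfolding bipartite_def cb_def
  by (rule exI[of _ "{x\<in>{0..<n}. x < a}"]) auto

lemma cb_no_sparse:
  assumes "S \<subseteq> {0..<a+b}" "k_sparse_set V (cb a) k S" "card S = j" "j \<ge> 1"
    "a \<le> j - 1" "b \<le> j - 1" "min a k + min b k \<le> j - 1"
  shows False
proof -
  define SX where "SX = S \<inter> {..<a}"
  define SY where "SY = S - {..<a}"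
  have SYs: "SY \<subseteq> {a..<a+b}" using assms(1) SY_def by auto
  have SXs: "SX \<subseteq> {..<a}" using SX_def by auto
  have fS: "finite S" using assms(1) finite_subset by blast
  have cXa: "card SX \<le> a" using card_mono[OF _ SXs] by simp
  have cYb: "card SY \<le> b" using card_mono[OF _ SYs] by simp
  have un: "card SX + card SY = j"
    using assms(3) card_Int_Diff[OF fS, of "{..<a}"] unfolding SX_def SY_def by simp
  have sp: "\<forall>v\<in>S. card {u\<in>S. cb a v u} \<le> k" using assms(2) unfolding k_sparse_set_def by auto
  show False
  proof (cases "SX = {} \<or> SY = {}")
    case True
    then show False using un cXa cYb assms by auto
  next
    case False
    then obtain x y where x: "x \<in> SX" and y: "y \<in> SY" by auto
    have "{u\<in>S. cb a x u} = SY" using x unfolding SX_def SY_def cb_def by auto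
    then have c1: "card SY \<le> k" using sp x SX_def by fastforce
    have "{u\<in>S. cb a y u} = SX" using y unfolding SX_def SY_def cb_def by auto
    then have c2: "card SX \<le> k" using sp y SY_def by fastforce
    show False using c1 c2 cXa cYb un assms(7) assms(4) by linarith
  qed
qed

theorem theorem5p5:
  fixes k i j :: nat
  assumes "k \<ge> 2" and "i \<ge> 2 * k + 3" and "j \<ge> k + 2"
  shows "ramsey_k_class bipartite k i j = (if j \<le> 2 * k then 2 * j - 1 - k else 2 * j - 1)"
proof -
  define n0 where "n0 = (if j \<le> 2 * k then 2 * j - 1 - k else 2 * j - 1)"
  define P where "P = (\<lambda>n. \<forall>E. simple_graph {0..<n} E \<and> bipartite {0..<n} E \<longrightarrow>
      (\<exists>S. card S = i \<and> k_dense_set {0..<n} E k S) \<or>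
      (\<exists>S. card S = j \<and> k_sparse_set {0..<n} E k S))"
  have up: "P n0"
    unfolding P_def
  proof (intro allI impI disjI2)
    fix E assume h: "simple_graph {0..<n0} E \<and> bipartite {0..<n0} E"
    define V where "V = {0..<n0}"
    obtain A where A: "A \<subseteq> V" "\<forall>u\<in>V. \<forall>v\<in>V. E u v \<longrightarrow> (u \<in> A \<longleftrightarrow> v \<notin> A)"
      using h unfolding bipartite_def V_def by blast
    define X where "X = V \<inter> A"
    define Y where "Y = V - A"
    have fX: "finite X" and fY: "finite Y" unfolding X_def Y_def V_def by auto
    have cXY: "card X + card Y = n0"
      unfolding X_def Y_def using card_Int_Diff[of V A] unfolding V_def by simp
    have main: "\<exists>SX SY. SX \<subseteq> X \<and> SY \<subseteq> Y \<and> card SX + card SY = j \<and>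
        (SY \<noteq> {} \<longrightarrow> card SX \<le> k) \<and> (SX \<noteq> {} \<longrightarrow> card SY \<le> k)"
    proof (cases "card X \<ge> j")
      case True
      then obtain SX where "SX \<subseteq> X" "card SX = j" using obtain_subset_with_card_n by metis
      then show ?thesis by (intro exI[of _ SX] exI[of _ "{}"]) auto
    next
      case nX: False
      show ?thesis
      proof (cases "card Y \<ge> j")
        case True
        then obtain SY where "SY \<subseteq> Y" "card SY = j" using obtain_subset_with_card_n by metis
        then show ?thesis by (intro exI[of _ "{}"] exI[of _ SY]) auto
      next
        case False
        have jk: "j \<le> 2 * k" using False nX cXY n0_def by (auto split: if_splits)
        define x where "x = min (card X) k"
        define y where "y = j - x"
        have xy: "x \<le> card X" "x \<le> k" "y \<le> k" "y \<le> card Y" "x + y = j"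
          using jk cXY n0_def False nX assms(3) unfolding x_def y_def by (auto simp: min_def)
        obtain SX where "SX \<subseteq> X" "card SX = x" using xy(1) obtain_subset_with_card_n by metis
        moreover obtain SY where "SY \<subseteq> Y" "card SY = y" using xy(4) obtain_subset_with_card_n by metis
        ultimately show ?thesis using xy by (intro exI[of _ SX] exI[of _ SY]) auto
      qed
    qed
    then obtain SX SY where S: "SX \<subseteq> X" "SY \<subseteq> Y" "card SX + card SY = j"
        "SY \<noteq> {} \<Longrightarrow> card SX \<le> k" "SX \<noteq> {} \<Longrightarrow> card SY \<le> k" by blast
    have fSX: "finite SX" using S(1) fX finite_subset by blast
    have fSY: "finite SY" using S(2) fY finite_subset by blast
    have "k_sparse_set V E k (SX \<union> SY)"
      by (rule sparse_union[OF A(2)]) (use S fSX fSY X_def Y_def in auto)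
    moreover have "card (SX \<union> SY) = j"
      using S fSX fSY X_def Y_def by (subst card_Un_disjoint) auto
    ultimately show "\<exists>S. card S = j \<and> k_sparse_set {0..<n0} E k S" using V_def by blast
  qed
  have low: "\<not> P m" if m: "m < n0" for m
  proof
    assume Pm: "P m"
    define a where "a = j - 1"
    define b where "b = n0 - 1 - a"
    have "simple_graph {0..<m} (cb a) \<and> bipartite {0..<m} (cb a)" using cb_simple cb_bip by blast
    then have "(\<exists>S. card S = i \<and> k_dense_set {0..<m} (cb a) k S) \<or>
      (\<exists>S. card S = j \<and> k_sparse_set {0..<m} (cb a) k S)" using Pm unfolding P_def by blast
    then show False
    proof
      assume "\<exists>S. card S = i \<and> k_dense_set {0..<m} (cb a) k S"
      then show False using no_dense[OF cb_bip] assms(2) by blast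
    next
      assume "\<exists>S. card S = j \<and> k_sparse_set {0..<m} (cb a) k S"
      then obtain S where S: "card S = j" "k_sparse_set {0..<m} (cb a) k S" by blast
      have "S \<subseteq> {0..<m}" using S(2) unfolding k_sparse_set_def by auto
      moreover have "m \<le> a + b" using m unfolding a_def b_def n0_def using assms by auto
      ultimately have "S \<subseteq> {0..<a+b}" by auto
      moreover have "min a k + min b k \<le> j - 1" "a \<le> j - 1" "b \<le> j - 1"
        unfolding a_def b_def n0_def using assms by auto
      ultimately show False using cb_no_sparse[OF _ S(2) S(1)] assms(3) by auto
    qed
  qed
  have "ramsey_k_class bipartite k i j = (LEAST n. P n)"
    unfolding ramsey_k_class_def P_def by simp
  also have "\<dots> = n0"
    by (rule Least_equality[where P=P, OF up]) (use low in \<open>meson not_le\<close>)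
  finally show ?thesis using n0_def by simp
qed

end
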